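(* Assume (R), let $(\mathbb P^n)_{n\ge1}\subset\mathcal P$ and suppose $\sup_n\mathbb E^{\mathbb P^n}[\int_0^1\lambda_1^n(t)\log\lambda_1^n(t)dt]<\infty$. Let $A^n_t:=\int_0^t\Sigma^{\mathbb P^n}_sds$. Then the laws of $A^n$ under $\mathbb P^n$, $n\ge1$, form a tight family in $\mathcal M_1(C([0,1];\mathbb S^d_+))$, where $C([0,1];\mathbb S^d_+)$ carries the uniform topology induced by any matrix norm.
   Context: $\Omega=C([0,1];\mathbb R^d)$ with canonical process $X$; $\mathcal P$ is the set of probability measures under which $X$ is a continuous local martingale with $\langle X\rangle_t=\int_0^t\Sigma^{\mathbb P}_sds$, $\Sigma^{\mathbb P}$ progressively measurable, $\mathbb S^d_+$-valued. $\bar\Sigma_2:[0,1]\times\mathbb R^d\to\mathbb S^d_{++}$, $\lambda_2$ continuous; (R): $\underline b\le\lambda_2\le\overline b$, $\bar\Sigma_2\preceq MI_d$ for constants $0<\underline b\le\overline b$, $M>0$. $\lambda_1^n(t):=\frac1d\mathrm{tr}(\bar\Sigma_2(t,X_t)^{-1}\Sigma^{\mathbb P^n}_t)$; convention $0\log0=0$. *)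

theory Defs
  imports "HOL-Analysis.Analysis" "HOL-Probability.Probability"
begin

text \<open>Paths: continuous maps [0,1] -> R^d, made canonical by requiring them to be
  extensional (undefined outside [0,1]).\<close>
definition path_set :: "(real \<Rightarrow> real^'d) set" where
  "path_set = {\<omega>. continuous_on {0..1} \<omega> \<and> \<omega> \<in> extensional {0..1}}"

definition Omega :: "(real \<Rightarrow> real^'d) measure" where
  "Omega = sigma path_set
     {{\<omega> \<in> path_set. \<omega> t \<in> B} | t B. t \<in> {0..1} \<and> B \<in> sets borel}"

definition Ffilt :: "real \<Rightarrow> (real \<Rightarrow> real^'d) measure" where
  "Ffilt t = sigma path_set
     {{\<omega> \<in> path_set. \<omega> s \<in> B} | s B. s \<in> {0..t} \<and> B \<in> sets borel}"

definition is_martingale :: "(real \<Rightarrow> real^'d) measure \<Rightarrow> (real \<Rightarrow> (real \<Rightarrow> real^'d) \<Rightarrow> real) \<Rightarrow> bool" where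
  "is_martingale P Y \<longleftrightarrow>
     (\<forall>t\<in>{0..1}. Y t \<in> borel_measurable (Ffilt t) \<and> integrable P (Y t)) \<and>
     (\<forall>s t B. 0 \<le> s \<longrightarrow> s \<le> t \<longrightarrow> t \<le> 1 \<longrightarrow> B \<in> sets (Ffilt s) \<longrightarrow>
        (\<integral>\<omega>. indicator B \<omega> * (Y t \<omega> - Y s \<omega>) \<partial>P) = 0)"

definition is_stopping_time :: "((real \<Rightarrow> real^'d) \<Rightarrow> real) \<Rightarrow> bool" where
  "is_stopping_time \<tau> \<longleftrightarrow>
     (\<forall>\<omega>\<in>path_set. \<tau> \<omega> \<in> {0..1}) \<and>
     (\<forall>t\<in>{0..1}. {\<omega> \<in> path_set. \<tau> \<omega> \<le> t} \<in> sets (Ffilt t))"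

definition is_cont_local_martingale :: "(real \<Rightarrow> real^'d) measure \<Rightarrow> (real \<Rightarrow> (real \<Rightarrow> real^'d) \<Rightarrow> real) \<Rightarrow> bool" where
  "is_cont_local_martingale P Y \<longleftrightarrow>
     (AE \<omega> in P. continuous_on {0..1} (\<lambda>t. Y t \<omega>)) \<and>
     Y 0 \<in> borel_measurable (Ffilt 0) \<and>
     (\<exists>\<tau> :: nat \<Rightarrow> (real \<Rightarrow> real^'d) \<Rightarrow> real.
        (\<forall>k. is_stopping_time (\<tau> k)) \<and>
        (\<forall>k. \<forall>\<omega>\<in>path_set. \<tau> k \<omega> \<le> \<tau> (Suc k) \<omega>) \<and>
        (AE \<omega> in P. \<exists>k. \<tau> k \<omega> = 1) \<and>
        (\<forall>k. is_martingale P (\<lambda>t \<omega>. Y (min t (\<tau> k \<omega>)) \<omega> - Y 0 \<omega>)))"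

definition psd_set :: "(real^'d^'d) set" where
  "psd_set = {A. transpose A = A \<and> (\<forall>v. 0 \<le> v \<bullet> (A *v v))}"

definition pd_set :: "(real^'d^'d) set" where
  "pd_set = {A. transpose A = A \<and> (\<forall>v. v \<noteq> 0 \<longrightarrow> 0 < v \<bullet> (A *v v))}"

definition int_cov :: "(real \<Rightarrow> (real \<Rightarrow> real^'d) \<Rightarrow> real^'d^'d) \<Rightarrow> real \<Rightarrow> (real \<Rightarrow> real^'d) \<Rightarrow> real^'d^'d" where
  "int_cov Sig t \<omega> = (LINT s:{0..t}|lborel. Sig s \<omega>)"

text \<open>P is in \<P> and Sig is (a version of) Sigma^P: X is a continuous local martingale
  with <X>_t = int_0^t Sig_s ds, characterised (as usual) by requiring
  X^i X^j - int_0^. Sig^{ij} ds to be a continuous local martingale.\<close>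
definition in_P_with :: "(real \<Rightarrow> real^'d) measure \<Rightarrow> (real \<Rightarrow> (real \<Rightarrow> real^'d) \<Rightarrow> real^'d^'d) \<Rightarrow> bool" where
  "in_P_with P Sig \<longleftrightarrow>
     prob_space P \<and> sets P = sets Omega \<and>
     (\<forall>t\<in>{0..1}. (\<lambda>(s,\<omega>). Sig s \<omega>) \<in> borel_measurable (restrict_space lborel {0..t} \<Otimes>\<^sub>M Ffilt t)) \<and>
     (\<forall>s\<in>{0..1}. \<forall>\<omega>\<in>path_set. Sig s \<omega> \<in> psd_set) \<and>
     (AE \<omega> in P. set_integrable lborel {0..1} (\<lambda>s. Sig s \<omega>)) \<and>
     (\<forall>i. is_cont_local_martingale P (\<lambda>t \<omega>. \<omega> t $ i)) \<and>
     (\<forall>i j. is_cont_local_martingale P (\<lambda>t \<omega>. \<omega> t $ i * \<omega> t $ j - int_cov Sig t \<omega> $ i $ j))"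

definition xlogx :: "real \<Rightarrow> real" where
  "xlogx x = (if x = 0 then 0 else x * ln x)"

definition lambda1 :: "(real \<Rightarrow> real^'d \<Rightarrow> real^'d^'d) \<Rightarrow> (real \<Rightarrow> (real \<Rightarrow> real^'d) \<Rightarrow> real^'d^'d) \<Rightarrow> real \<Rightarrow> (real \<Rightarrow> real^'d) \<Rightarrow> real" where
  "lambda1 Sbar2 Sig t \<omega> = trace (matrix_inv (Sbar2 t (\<omega> t)) ** Sig t \<omega>) / real CARD('d)"

definition CS_metric :: "(real \<Rightarrow> real^'d^'d) metric" where
  "CS_metric = cfunspace (top_of_set {0..1}) (submetric euclidean_metric psd_set)"

end

theory Submission
  imports Defs "HOL-Complex_Analysis.Great_Picard"
begin

lemma axis_quad: "axis i (1::real) \<bullet> ((A::real^'n^'n) *v axis j 1) = A$i$j"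
proof -
  have "axis i (1::real) \<bullet> ((A::real^'n^'n) *v axis j 1) = ((A::real^'n^'n) *v axis j 1) \<bullet> axis i 1"
    by (simp add: inner_commute)
  also have "\<dots> = A$i$j" by (simp add: inner_axis matrix_vector_mult_basis column_def)
  finally show ?thesis .
qed

lemma inner_axis_r: "(x::real^'n) \<bullet> axis i 1 = x $ i"
  by (simp add: inner_axis)

lemma quad_bilin:
  fixes A :: "real^'n^'n"
  shows "(x + y) \<bullet> (A *v (x + y)) = x \<bullet> (A *v x) + x \<bullet> (A *v y) + y \<bullet> (A *v x) + y \<bullet> (A *v y)"
  by (simp add: matrix_vector_right_distrib inner_add_left inner_add_right)

lemma quad_scale:
  fixes A :: "real^'n^'n"
  shows "(s *s x) \<bullet> (A *v (t *s y)) = s * t * (x \<bullet> (A *v y))"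
  by (simp add: matrix_vector_mult_scaleR scalar_mult_eq_scaleR)

lemma psd_quad: "A \<in> psd_set \<Longrightarrow> 0 \<le> v \<bullet> (A *v v)"
  by (simp add: psd_set_def)

lemma psd_sym: "A \<in> psd_set \<Longrightarrow> A$i$j = A$j$i"
proof -
  assume "A \<in> psd_set"
  then have "transpose A = A" by (simp add: psd_set_def)
  then have "(transpose A)$j$i = A$j$i" by simp
  then show ?thesis by (simp add: transpose_def)
qed

lemma quad_two:
  fixes A :: "real^'n^'n"
  shows "(s *s axis i 1 + t *s axis j 1) \<bullet> (A *v (s *s axis i 1 + t *s axis j 1))
     = s * s * A$i$i + s * t * A$i$j + t * s * A$j$i + t * t * A$j$j"
  by (simp add: quad_bilin quad_scale axis_quad)

lemma psd_diag: "A \<in> psd_set \<Longrightarrow> 0 \<le> A$i$i"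
  using psd_quad[of A "axis i 1"] by (simp add: axis_quad)

lemma psd_offdiag:
  assumes "A \<in> psd_set" shows "\<bar>A$i$j\<bar> \<le> (A$i$i + A$j$j)/2"
proof -
  have 1: "0 \<le> A$i$i + A$i$j + A$j$i + A$j$j"
  proof -
    have "0 \<le> 1 * 1 * A$i$i + 1 * 1 * A$i$j + 1 * 1 * A$j$i + 1 * 1 * A$j$j"
      using psd_quad[OF assms, of "1 *s axis i 1 + 1 *s axis j 1"] by (simp only: quad_two)
    then show ?thesis by simp
  qed
  have 2: "0 \<le> A$i$i - A$i$j - A$j$i + A$j$j"
  proof -
    have "0 \<le> 1 * 1 * A$i$i + 1 * (-1) * A$i$j + (-1) * 1 * A$j$i + (-1) * (-1) * A$j$j"
      using psd_quad[OF assms, of "1 *s axis i 1 + (-1) *s axis j 1"] by (simp only: quad_two)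
    then show ?thesis by simp
  qed
  show ?thesis using 1 2 psd_sym[OF assms, of i j] by (simp add: abs_le_iff)
qed

lemma psd_zero_diag:
  assumes "A \<in> psd_set" "A$i$i = 0" shows "A$i$j = 0"
proof (rule ccontr)
  assume ne: "A$i$j \<noteq> 0"
  define t where "t = - (A$j$j + 1) / (2 * A$i$j)"
  have "0 \<le> t * t * A$i$i + t * 1 * A$i$j + 1 * t * A$j$i + 1 * 1 * A$j$j"
    using psd_quad[OF assms(1), of "t *s axis i 1 + 1 *s axis j 1"] by (simp only: quad_two)
  also have "\<dots> = 2 * t * A$i$j + A$j$j" using assms(2) psd_sym[OF assms(1), of i j] by simp
  also have "\<dots> = -1" using ne by (simp add: t_def field_simps)
  finally show False by simp
qed

lemma psd_norm_le_trace:
  fixes A :: "real^'n^'n"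
  assumes "A \<in> psd_set" shows "norm A \<le> real CARD('n) * trace A"
proof -
  have "norm A \<le> (\<Sum>i\<in>UNIV. norm (A$i))" unfolding norm_vec_def by (rule L2_set_le_sum) simp
  also have "\<dots> \<le> (\<Sum>i\<in>UNIV. \<Sum>j\<in>UNIV. \<bar>A$i$j\<bar>)"
    by (intro sum_mono) (rule norm_le_l1_cart)
  also have "\<dots> \<le> (\<Sum>i\<in>UNIV. \<Sum>j\<in>UNIV. (A$i$i + A$j$j)/2)"
    by (intro sum_mono psd_offdiag[OF assms])
  also have "\<dots> = real CARD('n) * trace A"
    by (simp add: trace_def sum.distrib sum_divide_distrib[symmetric] add_divide_distrib sum_distrib_left[symmetric])
  finally show ?thesis .
qed

definition outer :: "real^'n \<Rightarrow> real^'n^'n" where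
  "outer u = (\<chi> k l. u$k * u$l)"

lemma trace_outer_mult: "trace (C ** outer u) = u \<bullet> (C *v u)"
  by (simp add: trace_def outer_def matrix_matrix_mult_def matrix_vector_mult_def inner_vec_def
      sum_distrib_left mult_ac)

lemma trace_outer: "trace (outer u) = u \<bullet> u"
  by (simp add: trace_def outer_def inner_vec_def)

lemma quad_outer: "v \<bullet> (outer u *v v) = (u \<bullet> v)^2"
  by (simp add: outer_def matrix_vector_mult_def inner_vec_def power2_eq_square
      sum_distrib_left sum_distrib_right mult_ac)

lemma sum_quad: "x \<bullet> ((A::real^'n^'n) *v y) = (\<Sum>k\<in>UNIV. \<Sum>l\<in>UNIV. x$k * A$k$l * y$l)"
  by (simp add: inner_vec_def matrix_vector_mult_def sum_distrib_left mult_ac)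

lemma trace_lower_aux:
  fixes C :: "real^'n^'n"
  assumes C: "\<And>u. a * (u \<bullet> u) \<le> u \<bullet> (C *v u)"
  shows "finite S \<Longrightarrow> \<forall>A. A \<in> psd_set \<and> (\<forall>k j. k \<notin> S \<longrightarrow> A$k$j = 0) \<longrightarrow> a * trace A \<le> trace (C ** A)"
proof (induction S rule: finite_induct)
  case empty
  show ?case
  proof (intro allI impI)
    fix A :: "real^'n^'n" assume "A \<in> psd_set \<and> (\<forall>k j. k \<notin> {} \<longrightarrow> A$k$j = 0)"
    then have "A = 0" by (simp add: vec_eq_iff)
    then show "a * trace A \<le> trace (C ** A)"
      by (simp add: trace_def)
  qed
next
  case (insert i S)
  show ?case
  proof (intro allI impI)
    fix A :: "real^'n^'n" assume hA: "A \<in> psd_set \<and> (\<forall>k j. k \<notin> insert i S \<longrightarrow> A$k$j = 0)"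
    have psd: "A \<in> psd_set" using hA by blast
    have sym: "\<And>k l. A$k$l = A$l$k" using psd_sym[OF psd] by blast
    show "a * trace A \<le> trace (C ** A)"
    proof (cases "A$i$i = 0")
      case True
      have "\<forall>k j. k \<notin> S \<longrightarrow> A$k$j = 0"
      proof (intro allI impI)
        fix k j assume "k \<notin> S"
        then show "A$k$j = 0" using hA psd_zero_diag[OF psd True, of j] by (cases "k = i") auto
      qed
      then show ?thesis using insert.IH psd by blast
    next
      case False
      then have pos: "0 < A$i$i" using psd_diag[OF psd, of i] by linarith
      define r where "r = sqrt (A$i$i)"
      have r2: "r * r = A$i$i" using pos by (simp add: r_def)
      have rpos: "0 < r" using pos by (simp add: r_def)
      define u :: "real^'n" where "u = (\<chi> k. A$k$i / r)"
      define B where "B = A - outer u"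
      have Bc: "B$k$l = A$k$l - A$k$i * A$l$i / A$i$i" for k l
        using r2 by (simp add: B_def outer_def u_def)
      have Bsym: "transpose B = B"
        by (simp add: vec_eq_iff transpose_def Bc sym mult.commute)
      have Bquad: "0 \<le> v \<bullet> (B *v v)" for v
      proof -
        define p where "p = (\<Sum>k\<in>UNIV. A$k$i * v$k)"
        define t where "t = - p / A$i$i"
        have e1: "v \<bullet> (A *v axis i 1) = p"
          by (simp add: p_def matrix_vector_mult_basis column_def inner_vec_def mult.commute)
        have e2: "axis i 1 \<bullet> (A *v v) = p"
        proof -
          have "axis i 1 \<bullet> (A *v v) = (A *v v) \<bullet> axis i 1" by (simp add: inner_commute)
          also have "\<dots> = (A *v v)$i" by (simp add: inner_axis)
          also have "\<dots> = p" by (simp add: matrix_vector_mult_def p_def sym mult.commute)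
          finally show ?thesis .
        qed
        have "0 \<le> (v + t *s axis i 1) \<bullet> (A *v (v + t *s axis i 1))"
          using psd_quad[OF psd] by blast
        also have "\<dots> = v \<bullet> (A *v v) + t * p + t * p + t * t * A$i$i"
          by (simp add: quad_bilin quad_scale[of 1 v A t, simplified] quad_scale[of t _ A 1, simplified]
                        quad_scale axis_quad e1 e2)
        also have "\<dots> = v \<bullet> (A *v v) - p * p / A$i$i"
          using pos by (simp add: t_def field_simps)
        finally have q: "p * p / A$i$i \<le> v \<bullet> (A *v v)" by simp
        have uv: "u \<bullet> v = p / r"
          by (simp add: u_def p_def inner_vec_def sum_divide_distrib)
        have "v \<bullet> (B *v v) = v \<bullet> (A *v v) - (u \<bullet> v)^2"
          by (simp add: B_def matrix_vector_mult_diff_rdistrib inner_diff_right quad_outer)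
        also have "(u \<bullet> v)^2 = p * p / A$i$i"
          using r2 by (simp add: uv power2_eq_square)
        finally show ?thesis using q by simp
      qed
      have Bpsd: "B \<in> psd_set" using Bsym Bquad by (simp add: psd_set_def)
      have Bsupp: "\<forall>k j. k \<notin> S \<longrightarrow> B$k$j = 0"
      proof (intro allI impI)
        fix k j assume k: "k \<notin> S"
        show "B$k$j = 0"
        proof (cases "k = i")
          case True then show ?thesis using pos by (simp add: Bc sym[of j i])
        next
          case False
          then have "A$k$j = 0" "A$k$i = 0" using hA k by auto
          then show ?thesis by (simp add: Bc)
        qed
      qed
      have IHB: "a * trace B \<le> trace (C ** B)" using insert.IH Bpsd Bsupp by blast
      have AB: "A = B + outer u" by (simp add: B_def)
      have "a * trace A = a * trace B + a * (u \<bullet> u)"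
        by (simp add: AB trace_add trace_outer distrib_left)
      also have "\<dots> \<le> trace (C ** B) + u \<bullet> (C *v u)"
        using IHB C[of u] by linarith
      also have "\<dots> = trace (C ** A)"
        by (simp add: AB matrix_add_ldistrib trace_add trace_outer_mult)
      finally show ?thesis .
    qed
  qed
qed

lemma trace_lower:
  fixes C :: "real^'n^'n"
  assumes "\<And>u. a * (u \<bullet> u) \<le> u \<bullet> (C *v u)" "A \<in> psd_set"
  shows "a * trace A \<le> trace (C ** A)"
  using trace_lower_aux[OF assms(1), of UNIV] assms(2) by simp

lemma sym_inner:
  fixes S :: "real^'n^'n"
  assumes "transpose S = S"
  shows "x \<bullet> (S *v y) = (S *v x) \<bullet> y"
proof -
  have "x \<bullet> (S *v y) = (x v* S) \<bullet> y" by (simp add: dot_lmul_matrix)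
  also have "x v* S = transpose S *v x" by (simp add: vector_matrix_mult_def matrix_vector_mult_def transpose_def vec_eq_iff mult.commute)
  finally show ?thesis using assms by simp
qed

lemma psd_cauchy_schwarz:
  fixes S :: "real^'n^'n"
  assumes "S \<in> psd_set"
  shows "(x \<bullet> (S *v y))^2 \<le> (x \<bullet> (S *v x)) * (y \<bullet> (S *v y))"
proof -
  have sym: "transpose S = S" using assms by (simp add: psd_set_def)
  define a where "a = x \<bullet> (S *v x)"
  define b where "b = x \<bullet> (S *v y)"
  define c where "c = y \<bullet> (S *v y)"
  have yx: "y \<bullet> (S *v x) = b" using sym_inner[OF sym, of y x] by (simp add: b_def inner_commute)
  have key: "0 \<le> a + 2 * t * b + t * t * c" for t
  proof -
    have "0 \<le> (x + t *s y) \<bullet> (S *v (x + t *s y))" using psd_quad[OF assms] by blast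
    also have "\<dots> = a + t * b + t * (y \<bullet> (S *v x)) + t * t * c"
      using quad_scale[of 1 x S t y] quad_scale[of t y S 1 x] quad_scale[of t y S t y]
      by (simp only: quad_bilin a_def b_def c_def scaleR_one vector_smult_lid mult_1_left mult_1_right)
    also have "\<dots> = a + 2 * t * b + t * t * c" using yx by simp
    finally show ?thesis .
  qed
  have c0: "0 \<le> c" using psd_quad[OF assms] by (simp add: c_def)
  show ?thesis
  proof (cases "c = 0")
    case True
    have "b = 0"
    proof (rule ccontr)
      assume "b \<noteq> 0"
      have "0 \<le> a + 2 * (- (a + 1) / (2 * b)) * b + (- (a + 1) / (2 * b)) * (- (a + 1) / (2 * b)) * c"
        by (rule key)
      also have "\<dots> = -1" using \<open>b \<noteq> 0\<close> True by (simp add: field_simps)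
      finally show False by simp
    qed
    then show ?thesis using True by (simp add: a_def b_def c_def)
  next
    case False
    then have cpos: "0 < c" using c0 by simp
    have "0 \<le> a + 2 * (- b / c) * b + (- b / c) * (- b / c) * c" by (rule key)
    also have "\<dots> = a - b * b / c" using cpos by (simp add: field_simps)
    finally have "b * b \<le> a * c" using cpos by (simp add: field_simps)
    then show ?thesis by (simp add: a_def b_def c_def power2_eq_square)
  qed
qed

lemma pd_psd: "S \<in> pd_set \<Longrightarrow> S \<in> psd_set"
proof -
  assume "S \<in> pd_set"
  then have "transpose S = S" "\<And>v. v \<noteq> 0 \<Longrightarrow> 0 < v \<bullet> (S *v v)" by (auto simp: pd_set_def)
  moreover have "0 \<le> v \<bullet> (S *v v)" for v
    using calculation(2)[of v] by (cases "v = 0") auto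
  ultimately show ?thesis by (simp add: psd_set_def)
qed

lemma pd_invertible:
  fixes S :: "real^'n^'n"
  assumes "S \<in> pd_set" shows "invertible S"
proof -
  have "inj ((*v) S)"
  proof (rule injI)
    fix x y assume "S *v x = S *v y"
    then have "S *v (x - y) = 0" by (simp add: matrix_vector_mult_diff_distrib)
    then have "(x - y) \<bullet> (S *v (x - y)) = 0" by simp
    then show "x = y" using assms unfolding pd_set_def
      by (metis (mono_tags, lifting) eq_iff_diff_eq_0 less_irrefl mem_Collect_eq)
  qed
  then show ?thesis by (simp add: invertible_left_inverse matrix_left_invertible_injective)
qed

lemma matrix_inv_right:
  fixes S :: "real^'n^'n"
  assumes "invertible S" shows "S ** matrix_inv S = mat 1"
proof -
  have "\<exists>A'. S ** A' = mat 1 \<and> A' ** S = mat 1" using assms by (simp add: invertible_def)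
  then have "S ** matrix_inv S = mat 1 \<and> matrix_inv S ** S = mat 1"
    unfolding matrix_inv_def by (rule someI_ex)
  then show ?thesis by blast
qed

lemma inv_lower:
  fixes S :: "real^'n^'n"
  assumes pd: "S \<in> pd_set" and MS: "\<forall>v. v \<bullet> (S *v v) \<le> M * (v \<bullet> v)" and M: "0 < M"
  shows "(1/M) * (u \<bullet> u) \<le> u \<bullet> (matrix_inv S *v u)"
proof -
  have psd: "S \<in> psd_set" using pd by (rule pd_psd)
  have sym: "transpose S = S" using psd by (simp add: psd_set_def)
  define w where "w = matrix_inv S *v u"
  have Sw: "S *v w = u"
    using matrix_inv_right[OF pd_invertible[OF pd]]
    by (simp add: w_def matrix_vector_mul_assoc)
  define q where "q = w \<bullet> (S *v w)"
  have q0: "0 \<le> q" using psd_quad[OF psd] by (simp add: q_def)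
  have uw: "u \<bullet> w = q" by (simp add: q_def Sw inner_commute)
  have "(w \<bullet> (S *v u))^2 \<le> q * (u \<bullet> (S *v u))"
    using psd_cauchy_schwarz[OF psd, of w u] by (simp add: q_def Sw)
  moreover have "w \<bullet> (S *v u) = u \<bullet> u" using sym_inner[OF sym, of w u] by (simp add: Sw)
  ultimately have "(u \<bullet> u)^2 \<le> q * (u \<bullet> (S *v u))" by simp
  also have "\<dots> \<le> q * (M * (u \<bullet> u))" using MS q0 by (simp add: mult_left_mono)
  finally have *: "(u \<bullet> u) * (u \<bullet> u) \<le> (q * M) * (u \<bullet> u)" by (simp add: power2_eq_square mult_ac)
  have "u \<bullet> u \<le> q * M"
  proof (cases "u \<bullet> u = 0")
    case True then show ?thesis using q0 M by simp
  next
    case False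
    then have "0 < u \<bullet> u" by simp
    then show ?thesis using * by (simp add: mult_le_cancel_right)
  qed
  then show ?thesis using M uw by (simp add: w_def field_simps)
qed

lemma norm_le_lambda:
  fixes Sb A :: "real^'n^'n"
  assumes "Sb \<in> pd_set" "\<forall>v. v \<bullet> (Sb *v v) \<le> M * (v \<bullet> v)" "0 < M" "A \<in> psd_set"
  shows "norm A \<le> (real CARD('n) * real CARD('n) * M) * (trace (matrix_inv Sb ** A) / real CARD('n))"
proof -
  have "(1/M) * trace A \<le> trace (matrix_inv Sb ** A)"
    using trace_lower[OF inv_lower[OF assms(1,2,3)] assms(4)] .
  then have "trace A \<le> M * trace (matrix_inv Sb ** A)" using assms(3) by (simp add: field_simps)
  then have "real CARD('n) * trace A \<le> real CARD('n) * (M * trace (matrix_inv Sb ** A))"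
    by (simp add: mult_left_mono)
  then have "norm A \<le> real CARD('n) * (M * trace (matrix_inv Sb ** A))"
    using psd_norm_le_trace[OF assms(4)] by linarith
  also have "\<dots> = (real CARD('n) * real CARD('n) * M) * (trace (matrix_inv Sb ** A) / real CARD('n))"
    by simp
  finally show ?thesis .
qed

definition psi :: "real \<Rightarrow> real" where "psi y = max 0 (xlogx y)"

lemma psi_nonneg: "0 \<le> psi y" by (simp add: psi_def)

lemma xlogx_nonpos: "0 \<le> y \<Longrightarrow> y \<le> 1 \<Longrightarrow> xlogx y \<le> 0"
  by (auto simp: xlogx_def mult_nonneg_nonpos)

lemma psi_small: "0 \<le> y \<Longrightarrow> y \<le> 1 \<Longrightarrow> psi y = 0"
  using xlogx_nonpos by (simp add: psi_def)

lemma psi_big: "1 \<le> y \<Longrightarrow> psi y = y * ln y"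
  by (simp add: psi_def xlogx_def)

lemma psi_mono: assumes "0 \<le> y" "y \<le> z" shows "psi y \<le> psi z"
proof (cases "y \<le> 1")
  case True then show ?thesis using psi_small[OF assms(1)] psi_nonneg by simp
next
  case False
  then have "1 \<le> y" "1 \<le> z" using assms by auto
  moreover have "y * ln y \<le> z * ln z"
    using \<open>1 \<le> y\<close> assms(2) by (intro mult_mono) auto
  ultimately show ?thesis by (simp add: psi_big)
qed

lemma xlogx_lower: assumes "0 \<le> y" shows "- exp (-1) \<le> xlogx y"
proof (cases "y = 0")
  case True then show ?thesis by (simp add: xlogx_def)
next
  case False
  then have y: "0 < y" using assms by simp
  have "ln (exp (-1) / y) \<le> exp (-1) / y - 1" using y by (intro ln_le_minus_one) simp
  then have "-1 - ln y \<le> exp (-1) / y - 1" using y by (simp add: ln_div)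
  then have "- ln y \<le> exp (-1) / y" by simp
  then have "y * (- ln y) \<le> y * (exp (-1) / y)" using y by (intro mult_left_mono) auto
  then show ?thesis using y by (simp add: xlogx_def)
qed

lemma psi_le: "0 \<le> y \<Longrightarrow> psi y \<le> xlogx y + exp (-1)"
  using xlogx_lower[of y] by (simp add: psi_def)

lemma psi_bound: assumes "1 \<le> m" "0 \<le> y" shows "y \<le> exp m + psi y / m"
proof (cases "y \<le> exp m")
  case True then show ?thesis using psi_nonneg[of y] assms by (simp add: add_increasing2)
next
  case False
  then have ym: "exp m < y" by simp
  have "1 \<le> exp m" using assms by simp
  then have y1: "1 \<le> y" using ym by linarith
  have "m < ln y" using ym y1 by (metis exp_less_cancel_iff exp_ln_iff less_le_trans zero_less_one)
  then have "y * m \<le> y * ln y" using y1 by (intro mult_left_mono) auto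
  then have "y \<le> psi y / m" using assms y1 by (simp add: psi_big field_simps)
  moreover have "0 \<le> exp m" by simp
  ultimately show ?thesis by linarith
qed

lemma borel_measurable_xlogx [measurable]: "xlogx \<in> borel_measurable borel"
  unfolding xlogx_def[abs_def] by measurable

lemma borel_measurable_psi [measurable]: "psi \<in> borel_measurable borel"
  unfolding psi_def[abs_def] by measurable

lemma closed_psd: "closed (psd_set :: (real^'n^'n) set)"
proof -
  have "psd_set = (\<Inter>i. \<Inter>j. {A::real^'n^'n. A$i$j = A$j$i}) \<inter> (\<Inter>v. {A::real^'n^'n. 0 \<le> v \<bullet> (A *v v)})"
    by (auto simp: psd_set_def vec_eq_iff transpose_def)
  also have "closed \<dots>"
  proof (intro closed_Int closed_INT ballI)
    fix i j show "closed {A::real^'n^'n. A$i$j = A$j$i}"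
      by (intro closed_Collect_eq continuous_intros)
  next
    fix v :: "real^'n"
    have "continuous_on UNIV (\<lambda>A::real^'n^'n. v \<bullet> (A *v v))"
      unfolding sum_quad by (intro continuous_intros)
    then show "closed {A::real^'n^'n. 0 \<le> v \<bullet> (A *v v)}"
      by (intro closed_Collect_le) (auto intro: continuous_intros)
  qed
  finally show ?thesis .
qed

lemma seq_lower_to:
  assumes "\<And>k. t - inverse (real (Suc k)) \<le> q k" "\<And>k. q k \<le> t"
  shows "q \<longlonglongrightarrow> t"
proof (rule tendsto_sandwich[of "\<lambda>k. t - inverse (real (Suc k))" q sequentially "\<lambda>k. t"])
  show "\<forall>\<^sub>F n in sequentially. t - inverse (real (Suc n)) \<le> q n" using assms by simp
  show "\<forall>\<^sub>F n in sequentially. q n \<le> t" using assms by simp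
  show "(\<lambda>k. t - inverse (real (Suc k))) \<longlonglongrightarrow> t"
    using tendsto_diff[OF tendsto_const LIMSEQ_inverse_real_of_nat, of t] by simp
qed simp

lemma seq_upper_to:
  assumes "\<And>k. q k \<le> t + inverse (real (Suc k))" "\<And>k. t \<le> q k"
  shows "q \<longlonglongrightarrow> t"
proof (rule tendsto_sandwich[of "\<lambda>k. t" q sequentially "\<lambda>k. t + inverse (real (Suc k))"])
  show "\<forall>\<^sub>F n in sequentially. q n \<le> t + inverse (real (Suc n))" using assms by simp
  show "\<forall>\<^sub>F n in sequentially. t \<le> q n" using assms by simp
  show "(\<lambda>k. t + inverse (real (Suc k))) \<longlonglongrightarrow> t"
    using tendsto_add[OF tendsto_const LIMSEQ_inverse_real_of_nat, of t] by simp
qed simp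

lemma approx_seq:
  fixes F :: "real \<Rightarrow> real^'n^'n"
  assumes Fm: "F \<in> borel_measurable (restrict_space lborel {0..1})" and t: "0 \<le> t" "t \<le> 1"
  shows "\<exists>q. (\<forall>k. q k \<in> {0..1} \<inter> \<rat>) \<and> q \<longlonglongrightarrow> t \<and>
      (\<lambda>k. (LINT s:{0..q k}|lborel. F s)) \<longlonglongrightarrow> (LINT s:{0..t}|lborel. F s)"
proof (cases "set_integrable lborel {0..t} F")
  case True
  show ?thesis
  proof (cases "t = 0")
    case True
    then show ?thesis by (intro exI[of _ "\<lambda>k. 0"]) simp
  next
    case False
    then have tpos: "0 < t" using t by simp
    have "\<forall>k. \<exists>r. r \<in> \<rat> \<and> max 0 (t - inverse (real (Suc k))) < r \<and> r < t"
    proof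
      fix k have "max 0 (t - inverse (real (Suc k))) < t" using tpos by simp
      from Rats_dense_in_real[OF this] show "\<exists>r. r \<in> \<rat> \<and> max 0 (t - inverse (real (Suc k))) < r \<and> r < t"
        by blast
    qed
    then obtain q where q0: "\<forall>k. q k \<in> \<rat> \<and> max 0 (t - inverse (real (Suc k))) < q k \<and> q k < t"
      using choice[of "\<lambda>k r. r \<in> \<rat> \<and> max 0 (t - inverse (real (Suc k))) < r \<and> r < t"] by blast
    then have q: "\<And>k. q k \<in> \<rat>" "\<And>k. max 0 (t - inverse (real (Suc k))) < q k" "\<And>k. q k < t"
      by auto
    have q01: "q k \<in> {0..1}" for k using q(2)[of k] q(3)[of k] t by simp
    have qt: "q \<longlonglongrightarrow> t"
      by (rule seq_lower_to) (use q(2,3) in \<open>auto intro: less_imp_le\<close>)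
    define G where "G = (\<lambda>s. indicator {0..1} s *\<^sub>R F s)"
    have Gm: "G \<in> borel_measurable lborel"
      using Fm unfolding G_def by (subst borel_measurable_restrict_space_iff[symmetric]) auto
    have int: "integrable lborel (\<lambda>s. indicator {0..t} s *\<^sub>R F s)"
      using True by (simp add: set_integrable_def)
    have eqG: "indicator {0..x} s *\<^sub>R F s = indicator {0..x} s *\<^sub>R G s" if "x \<le> 1" for x s
      using that by (auto simp: G_def indicator_def)
    have eqGf: "(\<lambda>s. indicator {0..x} s *\<^sub>R F s) = (\<lambda>s. indicator {0..x} s *\<^sub>R G s)" if "x \<le> 1" for x
      by (intro ext eqG that)
    have lim: "(\<lambda>k. integral\<^sup>L lborel (\<lambda>s. indicator {0..q k} s *\<^sub>R G s)) \<longlonglongrightarrow>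
               integral\<^sup>L lborel (\<lambda>s. indicator {0..t} s *\<^sub>R G s)"
    proof (rule integral_dominated_convergence[where w = "\<lambda>s. norm (indicator {0..t} s *\<^sub>R F s)"])
      show "(\<lambda>s. indicator {0..t} s *\<^sub>R G s) \<in> borel_measurable lborel" using Gm by measurable
      show "(\<lambda>s. indicator {0..q k} s *\<^sub>R G s) \<in> borel_measurable lborel" for k using Gm by measurable
      show "integrable lborel (\<lambda>s. norm (indicator {0..t} s *\<^sub>R F s))" using int by (rule integrable_norm)
      show "AE s in lborel. (\<lambda>k. indicator {0..q k} s *\<^sub>R G s) \<longlonglongrightarrow> indicator {0..t} s *\<^sub>R G s"
        using AE_lborel_singleton[of t]
      proof eventually_elim
        fix s assume "s \<noteq> t"
        show "(\<lambda>k. indicator {0..q k} s *\<^sub>R G s) \<longlonglongrightarrow> indicator {0..t} s *\<^sub>R G s"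
        proof (rule tendsto_eventually)
          show "\<forall>\<^sub>F k in sequentially. indicator {0..q k} s *\<^sub>R G s = indicator {0..t} s *\<^sub>R G s"
          proof (cases "s < t")
            case True
            have "\<forall>\<^sub>F k in sequentially. s < q k" using order_tendstoD(1)[OF qt True] .
            then show ?thesis
            proof eventually_elim
              fix k assume "s < q k"
              then show "indicator {0..q k} s *\<^sub>R G s = indicator {0..t} s *\<^sub>R G s"
                using True q(3)[of k] by (auto simp: indicator_def)
            qed
          next
            case False
            then have "t < s" using \<open>s \<noteq> t\<close> by simp
            have "\<forall>k. indicator {0..q k} s *\<^sub>R G s = indicator {0..t} s *\<^sub>R G s"
            proof
              fix k have "q k < t" by (rule q(3))
              then show "indicator {0..q k} s *\<^sub>R G s = indicator {0..t} s *\<^sub>R G s"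
                using \<open>t < s\<close> by (simp add: indicator_def)
            qed
            then show ?thesis by (rule always_eventually)
          qed
        qed
      qed
      show "AE s in lborel. norm (indicator {0..q k} s *\<^sub>R G s) \<le> norm (indicator {0..t} s *\<^sub>R F s)" for k
        using q(2)[of k] q(3)[of k] t by (intro AE_I2) (auto simp: G_def indicator_def)
    qed
    show ?thesis
    proof (intro exI conjI allI)
      show "q k \<in> {0..1} \<inter> \<rat>" for k using q01 q(1) by simp
      show "q \<longlonglongrightarrow> t" by (rule qt)
      have "(LINT s:{0..q k}|lborel. F s) = integral\<^sup>L lborel (\<lambda>s. indicator {0..q k} s *\<^sub>R G s)" for k
        unfolding set_lebesgue_integral_def using q01[of k] eqGf[of "q k"] by simp
      moreover have "(LINT s:{0..t}|lborel. F s) = integral\<^sup>L lborel (\<lambda>s. indicator {0..t} s *\<^sub>R G s)"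
        unfolding set_lebesgue_integral_def using t eqGf[of t] by simp
      ultimately show "(\<lambda>k. (LINT s:{0..q k}|lborel. F s)) \<longlonglongrightarrow> (LINT s:{0..t}|lborel. F s)"
        using lim by simp
    qed
  qed
next
  case False
  have I0: "(LINT s:{0..t}|lborel. F s) = 0"
    using False by (simp add: set_lebesgue_integral_def set_integrable_def not_integrable_integral_eq)
  show ?thesis
  proof (cases "t = 1")
    case True
    then show ?thesis by (intro exI[of _ "\<lambda>k. 1"]) simp
  next
    case tne: False
    then have t1: "t < 1" using t by simp
    have "\<forall>k. \<exists>r. r \<in> \<rat> \<and> t < r \<and> r < min 1 (t + inverse (real (Suc k)))"
    proof
      fix k have "t < min 1 (t + inverse (real (Suc k)))" using t1 by simp
      from Rats_dense_in_real[OF this] show "\<exists>r. r \<in> \<rat> \<and> t < r \<and> r < min 1 (t + inverse (real (Suc k)))"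
        by blast
    qed
    then obtain q where q0: "\<forall>k. q k \<in> \<rat> \<and> t < q k \<and> q k < min 1 (t + inverse (real (Suc k)))"
      using choice[of "\<lambda>k r. r \<in> \<rat> \<and> t < r \<and> r < min 1 (t + inverse (real (Suc k)))"] by blast
    then have q: "\<And>k. q k \<in> \<rat>" "\<And>k. t < q k" "\<And>k. q k < min 1 (t + inverse (real (Suc k)))"
      by auto
    have q01: "q k \<in> {0..1}" for k using q(2)[of k] q(3)[of k] t by simp
    have qt: "q \<longlonglongrightarrow> t"
      by (rule seq_upper_to) (use q(2,3) in \<open>auto intro: less_imp_le\<close>)
    have "(LINT s:{0..q k}|lborel. F s) = 0" for k
    proof -
      have "\<not> set_integrable lborel {0..q k} F"
      proof
        assume "set_integrable lborel {0..q k} F"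
        then have "set_integrable lborel {0..t} F"
          by (rule set_integrable_subset) (use q(2)[of k] in auto)
        then show False using False by simp
      qed
      then show ?thesis
        by (simp add: set_lebesgue_integral_def set_integrable_def not_integrable_integral_eq)
    qed
    then show ?thesis using q01 q(1) qt I0 by (intro exI[of _ q]) simp
  qed
qed

definition Kc :: "real set \<Rightarrow> real \<Rightarrow> real \<Rightarrow> real \<Rightarrow> (real \<Rightarrow> real^'n^'n) \<Rightarrow> bool" where
  "Kc T c R B f \<longleftrightarrow> (\<forall>t\<in>T. f t \<in> psd_set \<and> norm (f t) \<le> B) \<and>
     (\<forall>s\<in>T. \<forall>t\<in>T. \<forall>m::nat. 1 \<le> m \<longrightarrow> norm (f t - f s) \<le> c * (\<bar>t - s\<bar> * exp (real m) + R / real m))"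

lemma Kc_extend:
  assumes ap: "\<And>t. t \<in> {0..1} \<Longrightarrow> \<exists>q. (\<forall>k. q k \<in> T) \<and> q \<longlonglongrightarrow> t \<and> (\<lambda>k. f (q k)) \<longlonglongrightarrow> f t"
    and K: "Kc T c R B f"
  shows "Kc {0..1} c R B f"
  unfolding Kc_def
proof (intro conjI ballI allI impI)
  fix t :: real assume "t \<in> {0..1}"
  then obtain q where q: "\<And>k. q k \<in> T" "q \<longlonglongrightarrow> t" "(\<lambda>k. f (q k)) \<longlonglongrightarrow> f t" using ap by blast
  show "f t \<in> psd_set"
    by (rule closed_sequentially[OF closed_psd _ q(3)]) (use K q(1) in \<open>auto simp: Kc_def\<close>)
  show "norm (f t) \<le> B"
    by (rule LIMSEQ_le_const2[OF tendsto_norm[OF q(3)]]) (use K q(1) in \<open>auto simp: Kc_def\<close>)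
next
  fix s t :: real and m :: nat assume s: "s \<in> {0..1}" and t: "t \<in> {0..1}" and m: "1 \<le> m"
  obtain q where q: "\<And>k. q k \<in> T" "q \<longlonglongrightarrow> t" "(\<lambda>k. f (q k)) \<longlonglongrightarrow> f t" using ap t by blast
  obtain p where p: "\<And>k. p k \<in> T" "p \<longlonglongrightarrow> s" "(\<lambda>k. f (p k)) \<longlonglongrightarrow> f s" using ap s by blast
  show "norm (f t - f s) \<le> c * (\<bar>t - s\<bar> * exp (real m) + R / real m)"
  proof (rule LIMSEQ_le)
    show "(\<lambda>k. norm (f (q k) - f (p k))) \<longlonglongrightarrow> norm (f t - f s)"
      by (intro tendsto_intros q p)
    show "(\<lambda>k. c * (\<bar>q k - p k\<bar> * exp (real m) + R / real m)) \<longlonglongrightarrow> c * (\<bar>t - s\<bar> * exp (real m) + R / real m)"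
      by (intro tendsto_intros q p)
    show "\<exists>N. \<forall>k\<ge>N. norm (f (q k) - f (p k)) \<le> c * (\<bar>q k - p k\<bar> * exp (real m) + R / real m)"
      using K q(1) p(1) m by (auto simp: Kc_def)
  qed
qed

definition Kset :: "real \<Rightarrow> real \<Rightarrow> real \<Rightarrow> (real \<Rightarrow> real^'n^'n) set" where
  "Kset c R B = {f. f \<in> extensional {0..1} \<and> Kc {0..1} c R B f}"

lemma Kc_modulus:
  assumes c: "0 < c" and R: "0 \<le> R" and e: "0 < e"
  obtains d where "0 < d"
    "\<And>f x y. Kc {0..1} c R B (f :: real \<Rightarrow> real^'n^'n) \<Longrightarrow> x \<in> {0..1} \<Longrightarrow> y \<in> {0..1} \<Longrightarrow> \<bar>x - y\<bar> < d \<Longrightarrow> norm (f x - f y) < e"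
proof -
  obtain n :: nat where n: "2 * c * R / e < real n" using reals_Archimedean2 by blast
  define m where "m = Suc n"
  have m1: "1 \<le> m" by (simp add: m_def)
  have mpos: "0 < real m" by (simp add: m_def)
  have "2 * c * R / e < real m" using n by (simp add: m_def)
  then have "2 * c * R < e * real m" using e by (simp add: field_simps)
  then have cRm: "c * (R / real m) < e / 2" using mpos by (simp add: field_simps)
  define d where "d = e / (2 * c * exp (real m))"
  have dpos: "0 < d" using c e by (simp add: d_def)
  show ?thesis
  proof (rule that[OF dpos])
    fix f :: "real \<Rightarrow> real^'n^'n" and x y
    assume K: "Kc {0..1} c R B f" and x: "x \<in> {0..1}" and y: "y \<in> {0..1}" and xy: "\<bar>x - y\<bar> < d"
    have "norm (f x - f y) \<le> c * (\<bar>x - y\<bar> * exp (real m) + R / real m)"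
      using K x y m1 unfolding Kc_def by blast
    also have "\<dots> = c * (\<bar>x - y\<bar> * exp (real m)) + c * (R / real m)" by (simp add: distrib_left)
    also have "c * (\<bar>x - y\<bar> * exp (real m)) < c * (d * exp (real m))"
      using c xy by simp
    also have "c * (d * exp (real m)) = e / 2" using c by (simp add: d_def field_simps)
    finally show "norm (f x - f y) < e" using cRm by linarith
  qed
qed

lemma Kc_cont:
  assumes "0 < c" "0 \<le> R" "Kc {0..1} c R B f"
  shows "continuous_on {0..1} f"
  unfolding continuous_on_iff
proof (intro ballI allI impI)
  fix x e :: real assume x: "x \<in> {0..1}" and e: "0 < e"
  obtain d where d: "0 < d" "\<And>(f :: real \<Rightarrow> real^'a^'a) x y. Kc {0..1} c R B f \<Longrightarrow> x \<in> {0..1} \<Longrightarrow> y \<in> {0..1} \<Longrightarrow> \<bar>x - y\<bar> < d \<Longrightarrow> norm (f x - f y) < e"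
    using Kc_modulus[OF assms(1,2) e] by blast
  show "\<exists>d>0. \<forall>x'\<in>{0..1}. dist x' x < d \<longrightarrow> dist (f x') (f x) < e"
    using d assms(3) x by (intro exI[of _ d]) (auto simp: dist_norm)
qed

lemma mspace_CS: "mspace CS_metric =
   {f. (\<forall>t\<in>{0..1}. f t \<in> psd_set) \<and> f \<in> extensional {0..1} \<and>
       Metric_space.mbounded psd_set dist (f ` {0..1}) \<and> continuous_on {0..1} f}"
  by (auto simp: CS_metric_def mtopology_of_submetric continuous_map_in_subtopology
      continuous_map_iff_continuous Pi_iff)

lemma mdist_CS: "mdist CS_metric = mdist (cfunspace (top_of_set {0..1}) (submetric euclidean_metric psd_set))"
  by (simp add: CS_metric_def)

lemma zero_psd: "0 \<in> psd_set"
  by (simp add: psd_set_def transpose_def vec_eq_iff)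

lemma Kset_sub:
  assumes c: "0 < c" and R: "0 \<le> R"
  shows "(Kset c R B :: (real \<Rightarrow> real^'n^'n) set) \<subseteq> mspace CS_metric"
proof
  fix f :: "real \<Rightarrow> real^'n^'n" assume "f \<in> Kset c R B"
  then have ext: "f \<in> extensional {0..1}" and K: "Kc {0..1} c R B f" by (auto simp: Kset_def)
  have ms: "Metric_space (psd_set :: (real^'n^'n) set) dist"
    using Metric_space_mspace_mdist[of "submetric euclidean_metric (psd_set :: (real^'n^'n) set)"] by simp
  have bd: "Metric_space.mbounded psd_set dist (f ` {0..1})"
  proof -
    have "f ` {0..1} \<subseteq> Metric_space.mcball psd_set dist 0 B"
      using K zero_psd by (auto simp: Kc_def Metric_space.mcball_def[OF ms] dist_norm)
    then show ?thesis by (auto simp: Metric_space.mbounded_def[OF ms])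
  qed
  show "f \<in> mspace CS_metric"
    using K ext bd Kc_cont[OF c R K] by (auto simp: mspace_CS Kc_def)
qed

lemma Kc_limit:
  assumes lim: "\<And>t. t \<in> {0..1} \<Longrightarrow> (\<lambda>n. h n t) \<longlonglongrightarrow> f t"
    and K: "\<And>n. Kc {0..1} c R B (h n)"
  shows "Kc {0..1} c R B f"
  unfolding Kc_def
proof (intro conjI ballI allI impI)
  fix t :: real assume t: "t \<in> {0..1}"
  show "f t \<in> psd_set"
    by (rule closed_sequentially[OF closed_psd _ lim[OF t]]) (use K t in \<open>auto simp: Kc_def\<close>)
  show "norm (f t) \<le> B"
    by (rule LIMSEQ_le_const2[OF tendsto_norm[OF lim[OF t]]]) (use K t in \<open>auto simp: Kc_def\<close>)
next
  fix s t :: real and m :: nat assume s: "s \<in> {0..1}" and t: "t \<in> {0..1}" and m: "1 \<le> m"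
  show "norm (f t - f s) \<le> c * (\<bar>t - s\<bar> * exp (real m) + R / real m)"
  proof (rule LIMSEQ_le_const2)
    show "(\<lambda>n. norm (h n t - h n s)) \<longlonglongrightarrow> norm (f t - f s)"
      by (intro tendsto_intros lim s t)
    show "\<exists>N. \<forall>n\<ge>N. norm (h n t - h n s) \<le> c * (\<bar>t - s\<bar> * exp (real m) + R / real m)"
      using K s t m by (auto simp: Kc_def)
  qed
qed

lemma compact_Kset:
  assumes c: "0 < c" and R: "0 \<le> R"
  shows "compactin (mtopology_of CS_metric) (Kset c R B :: (real \<Rightarrow> real^'n^'n) set)"
  unfolding mtopology_of_def Metric_space.compactin_sequentially[OF Metric_space_mspace_mdist]
proof (intro conjI allI impI)
  show "Kset c R B \<subseteq> mspace CS_metric" by (rule Kset_sub[OF c R])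
  fix \<sigma> :: "nat \<Rightarrow> real \<Rightarrow> real^'n^'n" assume rs: "range \<sigma> \<subseteq> Kset c R B"
  then have K: "Kc {0..1} c R B (\<sigma> n)" for n by (auto simp: Kset_def)
  obtain g k where g: "continuous_on {0..1} g" and k: "strict_mono (k :: nat \<Rightarrow> nat)"
    and unif: "\<And>e. 0 < e \<Longrightarrow> \<exists>N. \<forall>n x. n \<ge> N \<and> x \<in> {0..1} \<longrightarrow> norm (\<sigma> (k n) x - g x) < e"
  proof (rule Arzela_Ascoli[of "{0..1}" \<sigma> B])
    show "compact {0..1::real}" by simp
    show "norm (\<sigma> n x) \<le> B" if "x \<in> {0..1}" for n x using K[of n] that by (auto simp: Kc_def)
    fix x e :: real assume x: "x \<in> {0..1}" and e: "0 < e"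
    obtain d where d: "0 < d" "\<And>(f :: real \<Rightarrow> real^'n^'n) x y. Kc {0..1} c R B f \<Longrightarrow> x \<in> {0..1} \<Longrightarrow> y \<in> {0..1} \<Longrightarrow> \<bar>x - y\<bar> < d \<Longrightarrow> norm (f x - f y) < e"
      using Kc_modulus[OF c R e] by blast
    show "\<exists>d>0. \<forall>n y. y \<in> {0..1} \<and> norm (x - y) < d \<longrightarrow> norm (\<sigma> n x - \<sigma> n y) < e"
      using d K x by (intro exI[of _ d]) auto
  qed blast
  define l where "l = restrict g {0..1}"
  have ptw: "(\<lambda>n. \<sigma> (k n) t) \<longlonglongrightarrow> l t" if t: "t \<in> {0..1}" for t
  proof (rule LIMSEQ_I)
    fix r :: real assume "0 < r"
    then obtain N where "\<forall>n x. n \<ge> N \<and> x \<in> {0..1} \<longrightarrow> norm (\<sigma> (k n) x - g x) < r" using unif by blast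
    then show "\<exists>N. \<forall>n\<ge>N. norm (\<sigma> (k n) t - l t) < r" using t by (auto simp: l_def)
  qed
  have lKc: "Kc {0..1} c R B l" by (rule Kc_limit[OF ptw K])
  have "l \<in> extensional {0..1}" by (simp add: l_def)
  then have lK: "l \<in> Kset c R B" using lKc by (simp add: Kset_def)
  have lim: "limitin (Metric_space.mtopology (mspace CS_metric) (mdist CS_metric)) (\<sigma> \<circ> k) l sequentially"
    unfolding Metric_space.limitin_metric[OF Metric_space_mspace_mdist]
  proof (intro conjI allI impI)
    show "l \<in> mspace CS_metric" using lK Kset_sub[OF c R] by blast
    fix e :: real assume e: "0 < e"
    then obtain N where N: "\<forall>n x. n \<ge> N \<and> x \<in> {0..1} \<longrightarrow> norm (\<sigma> (k n) x - g x) < e / 2"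
      using unif[of "e/2"] by auto
    show "\<forall>\<^sub>F n in sequentially. (\<sigma> \<circ> k) n \<in> mspace CS_metric \<and> mdist CS_metric ((\<sigma> \<circ> k) n) l < e"
      unfolding eventually_sequentially
    proof (intro exI allI impI conjI)
      fix n assume n: "N \<le> n"
      show "(\<sigma> \<circ> k) n \<in> mspace CS_metric" using rs Kset_sub[OF c R] by auto
      have "mdist CS_metric ((\<sigma> \<circ> k) n) l \<le> e / 2"
        unfolding mdist_CS
      proof (rule mdist_cfunspace_le)
        show "0 \<le> e / 2" using e by simp
        fix x assume "x \<in> topspace (top_of_set {0..1::real})"
        then have x: "x \<in> {0..1}" by simp
        show "mdist (submetric euclidean_metric psd_set) ((\<sigma> \<circ> k) n x) (l x) \<le> e / 2"
          using N n x by (auto simp: l_def dist_norm less_imp_le)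
      qed
      then show "mdist CS_metric ((\<sigma> \<circ> k) n) l < e" using e by linarith
    qed
  qed
  show "\<exists>l r. l \<in> Kset c R B \<and> strict_mono r \<and> limitin (Metric_space.mtopology (mspace CS_metric) (mdist CS_metric)) (\<sigma> \<circ> r) l sequentially"
    using lK k lim by blast
qed

lemma psd_scale: "0 \<le> r \<Longrightarrow> A \<in> psd_set \<Longrightarrow> r *\<^sub>R A \<in> psd_set"
  unfolding psd_set_def
  by (auto simp: transpose_def vec_eq_iff scaleR_matrix_vector_assoc[symmetric] intro!: mult_nonneg_nonneg)

lemma bl_quad: "bounded_linear (\<lambda>A::real^'n^'n. v \<bullet> (A *v v))"
proof (rule linear_conv_bounded_linear[THEN iffD1], rule linearI)
  fix A B :: "real^'n^'n" and r :: real
  show "v \<bullet> ((A + B) *v v) = v \<bullet> (A *v v) + v \<bullet> (B *v v)"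
    by (simp add: matrix_vector_mult_add_rdistrib inner_add_right)
  show "v \<bullet> ((r *\<^sub>R A) *v v) = r *\<^sub>R (v \<bullet> (A *v v))"
    by (simp add: scaleR_matrix_vector_assoc[symmetric])
qed

lemma bl_comp: "bounded_linear (\<lambda>A::real^'n^'n. A $ i $ j - A $ j $ i)"
  by (intro bounded_linear_sub bounded_linear_compose[OF bounded_linear_vec_nth bounded_linear_vec_nth])

lemma integral_psd:
  fixes H :: "'a \<Rightarrow> real^'n^'n"
  assumes int: "integrable M H" and psd: "\<And>x. x \<in> space M \<Longrightarrow> H x \<in> psd_set"
  shows "integral\<^sup>L M H \<in> psd_set"
proof -
  have sym: "(integral\<^sup>L M H) $ i $ j = (integral\<^sup>L M H) $ j $ i" for i j
  proof -
    have "(integral\<^sup>L M H) $ i $ j - (integral\<^sup>L M H) $ j $ i = integral\<^sup>L M (\<lambda>x. H x $ i $ j - H x $ j $ i)"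
      using integral_bounded_linear[OF bl_comp int, of i j] by simp
    also have "\<dots> = integral\<^sup>L M (\<lambda>x. 0)"
      by (rule Bochner_Integration.integral_cong) (use psd psd_sym in auto)
    finally show ?thesis by simp
  qed
  have quad: "0 \<le> v \<bullet> (integral\<^sup>L M H *v v)" for v
  proof -
    have "v \<bullet> (integral\<^sup>L M H *v v) = integral\<^sup>L M (\<lambda>x. v \<bullet> (H x *v v))"
      using integral_bounded_linear[OF bl_quad int, of v] by simp
    also have "0 \<le> \<dots>"
      by (rule integral_nonneg_AE) (use psd psd_quad in \<open>auto intro!: AE_I2\<close>)
    finally show ?thesis .
  qed
  show ?thesis using sym quad by (simp add: psd_set_def transpose_def vec_eq_iff)
qed

lemma good_path:
  fixes F :: "real \<Rightarrow> real^'n^'n"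
  assumes Fm: "F \<in> borel_measurable (restrict_space lborel {0..1})"
    and Fpsd: "\<And>s. s \<in> {0..1} \<Longrightarrow> F s \<in> psd_set"
    and c: "0 < c" and R: "0 < R"
    and Phi: "(\<integral>\<^sup>+ s. ennreal (psi (norm (F s) / c)) \<partial>(restrict_space lborel {0..1})) \<le> ennreal R"
  shows "Kc {0..1} c R (c * (exp 1 + R)) (\<lambda>t. LINT s:{0..t}|lborel. F s)"
proof -
  define G where "G = (\<lambda>s. indicator {0..1} s *\<^sub>R F s)"
  have Gm[measurable]: "G \<in> borel_measurable lborel"
    using Fm unfolding G_def by (subst borel_measurable_restrict_space_iff[symmetric]) auto
  have Gpsd: "G s \<in> psd_set" for s
    using Fpsd zero_psd by (cases "s \<in> {0..1}") (auto simp: G_def)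
  have Phi': "(\<integral>\<^sup>+ s. ennreal (psi (norm (G s) / c)) * indicator {0..1} s \<partial>lborel) \<le> ennreal R"
  proof -
    have "(\<integral>\<^sup>+ s. ennreal (psi (norm (G s) / c)) * indicator {0..1} s \<partial>lborel)
        = (\<integral>\<^sup>+ s. ennreal (psi (norm (F s) / c)) * indicator {0..1} s \<partial>lborel)"
      by (intro nn_integral_cong) (auto simp: G_def indicator_def)
    also have "\<dots> = (\<integral>\<^sup>+ s. ennreal (psi (norm (F s) / c)) \<partial>(restrict_space lborel {0..1}))"
      by (subst nn_integral_restrict_space) auto
    finally show ?thesis using Phi by simp
  qed
  have bound: "(\<integral>\<^sup>+ s. ennreal (norm (indicator I s *\<^sub>R G s)) \<partial>lborel) \<le> ennreal (c * ((b - a) * exp m + R / m))"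
    if I: "I \<in> sets lborel" "I \<subseteq> {a..b}" and ab: "0 \<le> a" "a \<le> b" "b \<le> 1" and m: "1 \<le> m" for I a b m
  proof -
    have pt: "ennreal (norm (indicator I s *\<^sub>R G s))
        \<le> ennreal (c * exp m) * indicator {a..b} s + ennreal (c / m) * (ennreal (psi (norm (G s) / c)) * indicator {0..1} s)" for s
    proof (cases "s \<in> I")
      case True
      then have s: "s \<in> {a..b}" "s \<in> {0..1}" using I ab by auto
      have "norm (G s) / c \<le> exp m + psi (norm (G s) / c) / m"
        by (rule psi_bound[OF m]) (use c in simp)
      then have "norm (G s) \<le> c * (exp m + psi (norm (G s) / c) / m)"
        using c by (simp add: field_simps)
      also have "\<dots> = c * exp m + (c / m) * psi (norm (G s) / c)" by (simp add: field_simps)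
      finally have *: "norm (G s) \<le> c * exp m + (c / m) * psi (norm (G s) / c)" .
      have "ennreal (norm (indicator I s *\<^sub>R G s)) = ennreal (norm (G s))" using True by simp
      also have "\<dots> \<le> ennreal (c * exp m + (c / m) * psi (norm (G s) / c))"
        using * by (simp add: ennreal_leI)
      also have "\<dots> = ennreal (c * exp m) + ennreal ((c / m) * psi (norm (G s) / c))"
        using c m psi_nonneg[of "norm (G s) / c"] by (intro ennreal_plus) auto
      also have "ennreal ((c / m) * psi (norm (G s) / c)) = ennreal (c / m) * ennreal (psi (norm (G s) / c))"
        using c m psi_nonneg[of "norm (G s) / c"] by (intro ennreal_mult) auto
      finally show ?thesis using s by simp
    next
      case False then show ?thesis by simp
    qed
    have "(\<integral>\<^sup>+ s. ennreal (norm (indicator I s *\<^sub>R G s)) \<partial>lborel)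
        \<le> (\<integral>\<^sup>+ s. ennreal (c * exp m) * indicator {a..b} s + ennreal (c / m) * (ennreal (psi (norm (G s) / c)) * indicator {0..1} s) \<partial>lborel)"
      by (intro nn_integral_mono pt)
    also have "\<dots> = ennreal (c * exp m) * (\<integral>\<^sup>+ s. indicator {a..b} s \<partial>lborel)
        + ennreal (c / m) * (\<integral>\<^sup>+ s. ennreal (psi (norm (G s) / c)) * indicator {0..1} s \<partial>lborel)"
      by (simp add: nn_integral_add nn_integral_cmult)
    also have "\<dots> \<le> ennreal (c * exp m) * ennreal (b - a) + ennreal (c / m) * ennreal R"
      using ab Phi' by (intro add_mono mult_left_mono) auto
    also have "ennreal (c * exp m) * ennreal (b - a) = ennreal (c * exp m * (b - a))"
      using c ab by (intro ennreal_mult[symmetric]) auto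
    also have "ennreal (c / m) * ennreal R = ennreal (c / m * R)"
      using c m R by (intro ennreal_mult[symmetric]) auto
    also have "ennreal (c * exp m * (b - a)) + ennreal (c / m * R) = ennreal (c * exp m * (b - a) + c / m * R)"
      using c m R ab by (intro ennreal_plus[symmetric]) auto
    also have "c * exp m * (b - a) + c / m * R = c * ((b - a) * exp m + R / m)"
      by (simp add: algebra_simps)
    finally show ?thesis .
  qed
  have Gint: "integrable lborel G"
  proof (rule integrableI_bounded)
    have "(\<integral>\<^sup>+ s. ennreal (norm (G s)) \<partial>lborel) = (\<integral>\<^sup>+ s. ennreal (norm (indicator {0..1} s *\<^sub>R G s)) \<partial>lborel)"
      by (intro nn_integral_cong) (auto simp: G_def indicator_def)
    also have "\<dots> \<le> ennreal (c * ((1 - 0) * exp 1 + R / 1))" by (rule bound) auto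
    also have "\<dots> < \<infinity>" by simp
    finally show "(\<integral>\<^sup>+ s. ennreal (norm (G s)) \<partial>lborel) < \<infinity>" .
  qed simp
  have normI: "norm (LINT s|lborel. indicator I s *\<^sub>R G s) \<le> c * ((b - a) * exp m + R / m)"
    if I: "I \<in> sets lborel" "I \<subseteq> {a..b}" and ab: "0 \<le> a" "a \<le> b" "b \<le> 1" and m: "1 \<le> m" for I a b m
  proof -
    have "ennreal (norm (LINT s|lborel. indicator I s *\<^sub>R G s)) \<le> (\<integral>\<^sup>+ s. ennreal (norm (indicator I s *\<^sub>R G s)) \<partial>lborel)"
      by (rule integral_norm_bound_ennreal) (rule integrable_mult_indicator[OF I(1) Gint])
    also have "\<dots> \<le> ennreal (c * ((b - a) * exp m + R / m))" by (rule bound[OF I ab m])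
    finally show ?thesis using c R ab m by (subst (asm) ennreal_le_iff) auto
  qed
  have Aeq: "(LINT s:{0..t}|lborel. F s) = (LINT s|lborel. indicator {0..t} s *\<^sub>R G s)" if "t \<le> 1" for t
  proof -
    have "(\<lambda>s. indicator {0..t} s *\<^sub>R F s) = (\<lambda>s. indicator {0..t} s *\<^sub>R G s)"
      using that by (auto simp: G_def indicator_def)
    then show ?thesis by (simp add: set_lebesgue_integral_def)
  qed
  show ?thesis
    unfolding Kc_def
  proof (intro conjI ballI allI impI)
    fix t :: real assume t: "t \<in> {0..1}"
    have "(LINT s|lborel. indicator {0..t} s *\<^sub>R G s) \<in> psd_set"
      by (intro integral_psd integrable_mult_indicator Gint psd_scale Gpsd) auto
    then show "(LINT s:{0..t}|lborel. F s) \<in> psd_set" using Aeq[of t] t by simp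
    have "norm (LINT s|lborel. indicator {0..t} s *\<^sub>R G s) \<le> c * ((t - 0) * exp 1 + R / 1)"
      using t by (intro normI) auto
    also have "\<dots> \<le> c * (exp 1 + R)"
      using t c by (intro mult_left_mono) auto
    finally show "norm (LINT s:{0..t}|lborel. F s) \<le> c * (exp 1 + R)" using t Aeq[of t] by simp
  next
    fix s t :: real and m :: nat assume s: "s \<in> {0..1}" and t: "t \<in> {0..1}" and m: "1 \<le> m"
    have diff: "norm ((LINT s:{0..y}|lborel. F s) - (LINT s:{0..x}|lborel. F s)) \<le> c * ((y - x) * exp (real m) + R / real m)"
      if xy: "0 \<le> x" "x \<le> y" "y \<le> 1" for x y
    proof -
      have "(LINT s:{0..y}|lborel. F s) - (LINT s:{0..x}|lborel. F s)
          = (LINT s|lborel. indicator {0..y} s *\<^sub>R G s - indicator {0..x} s *\<^sub>R G s)"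
        using xy Aeq[of x] Aeq[of y]
        by (simp add: integrable_mult_indicator[OF _ Gint])
      also have "\<dots> = (LINT s|lborel. indicator {x<..y} s *\<^sub>R G s)"
        using xy by (intro Bochner_Integration.integral_cong) (auto simp: indicator_def)
      finally have eq: "(LINT s:{0..y}|lborel. F s) - (LINT s:{0..x}|lborel. F s) = (LINT s|lborel. indicator {x<..y} s *\<^sub>R G s)" .
      have "norm (LINT s|lborel. indicator {x<..y} s *\<^sub>R G s) \<le> c * ((y - x) * exp (real m) + R / real m)"
        using xy m by (intro normI) auto
      then show ?thesis using eq by simp
    qed
    have diff2: "norm ((LINT s:{0..t}|lborel. F s) - (LINT s:{0..s}|lborel. F s)) \<le> c * ((t - s) * exp (real m) + R / real m)"
      if "s \<le> t" using diff[of s t] s t that by simp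
    have diff3: "norm ((LINT s:{0..t}|lborel. F s) - (LINT s:{0..s}|lborel. F s)) \<le> c * ((s - t) * exp (real m) + R / real m)"
      if "t \<le> s" using diff[of t s] s t that by (simp add: norm_minus_commute)
    show "norm ((LINT s:{0..t}|lborel. F s) - (LINT s:{0..s}|lborel. F s)) \<le> c * (\<bar>t - s\<bar> * exp (real m) + R / real m)"
    proof (cases "s \<le> t")
      case True then show ?thesis using diff2 by simp
    next
      case False then show ?thesis using diff3 by simp
    qed
  qed
qed

lemma space_P: "in_P_with P Sg \<Longrightarrow> space P = path_set"
proof -
  assume "in_P_with P Sg"
  then have "sets P = sets Omega" by (simp add: in_P_with_def)
  then have "space P = space Omega" by (rule sets_eq_imp_space_eq)
  also have "space Omega = path_set" by (simp add: Omega_def space_measure_of_conv)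
  finally show ?thesis .
qed

lemma joint_meas:
  assumes "in_P_with P Sg"
  shows "(\<lambda>(s, \<omega>). Sg s \<omega>) \<in> borel_measurable (restrict_space lborel {0..1} \<Otimes>\<^sub>M P)"
proof -
  have m: "(\<lambda>(s, \<omega>). Sg s \<omega>) \<in> borel_measurable (restrict_space lborel {0..1} \<Otimes>\<^sub>M Ffilt 1)"
    using assms by (simp add: in_P_with_def)
  have "sets (Ffilt 1) = sets P" using assms by (simp add: in_P_with_def Ffilt_def Omega_def)
  then have "sets (restrict_space lborel {0..1} \<Otimes>\<^sub>M Ffilt 1) = sets (restrict_space lborel {0..1} \<Otimes>\<^sub>M P)"
    by (intro sets_pair_measure_cong) auto
  then have e: "(restrict_space lborel {0..1} \<Otimes>\<^sub>M Ffilt 1 \<rightarrow>\<^sub>M (borel :: (real^'n^'n) measure)) = (restrict_space lborel {0..1} \<Otimes>\<^sub>M P \<rightarrow>\<^sub>M borel)"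
    by (rule measurable_cong_sets[OF _ refl])
  show ?thesis using m unfolding e .
qed

lemma joint_meas_swap:
  assumes "in_P_with P Sg"
  shows "(\<lambda>(\<omega>, s). Sg s \<omega>) \<in> borel_measurable (P \<Otimes>\<^sub>M restrict_space lborel {0..1})"
  using joint_meas[OF assms] by (subst measurable_pair_swap_iff) (simp add: case_prod_beta)

lemma sf_N: "sigma_finite_measure (restrict_space lborel {0..1::real})"
  by (rule sigma_finite_measure_restrict_space[OF lborel.sigma_finite_measure_axioms]) simp

lemma path_meas:
  assumes "in_P_with P Sg" "\<omega> \<in> space P"
  shows "(\<lambda>s. Sg s \<omega>) \<in> borel_measurable (restrict_space lborel {0..1})"
  using measurable_compose[OF measurable_Pair2'[OF assms(2), of "restrict_space lborel {0..1}"] joint_meas[OF assms(1)]]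
  by simp

lemma Phi_meas:
  assumes "in_P_with P Sg"
  shows "(\<lambda>\<omega>. \<integral>\<^sup>+ s. ennreal (psi (norm (Sg s \<omega>) / c)) \<partial>(restrict_space lborel {0..1})) \<in> borel_measurable P"
proof (rule sigma_finite_measure.borel_measurable_nn_integral[OF sf_N])
  have "(\<lambda>p. ennreal (psi (norm ((\<lambda>(\<omega>, s). Sg s \<omega>) p) / c))) \<in> borel_measurable (P \<Otimes>\<^sub>M restrict_space lborel {0..1})"
    by (rule measurable_compose[OF joint_meas_swap[OF assms]]) measurable
  then show "(\<lambda>(x, y). ennreal (psi (norm (Sg y x) / c))) \<in> borel_measurable (P \<Otimes>\<^sub>M restrict_space lborel {0..1})"
    by (simp add: case_prod_beta)
qed

lemma At_meas:
  assumes "in_P_with P Sg" "t \<in> {0..1}"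
  shows "(\<lambda>\<omega>. int_cov Sg t \<omega>) \<in> borel_measurable P"
proof -
  have eq: "int_cov Sg t \<omega> = (\<integral>s. indicator {0..t} s *\<^sub>R Sg s \<omega> \<partial>(restrict_space lborel {0..1}))" for \<omega>
  proof -
    have "(\<integral>s. indicator {0..t} s *\<^sub>R Sg s \<omega> \<partial>(restrict_space lborel {0..1}))
        = (LINT s|lborel. indicator {0..1} s *\<^sub>R (indicator {0..t} s *\<^sub>R Sg s \<omega>))"
      by (subst integral_restrict_space) auto
    also have "(\<lambda>s. indicator {0..1} s *\<^sub>R (indicator {0..t} s *\<^sub>R Sg s \<omega>)) = (\<lambda>s. indicator {0..t} s *\<^sub>R Sg s \<omega>)"
      using assms(2) by (auto simp: indicator_def)
    finally show ?thesis by (simp add: int_cov_def set_lebesgue_integral_def)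
  qed
  have "(\<lambda>\<omega>. \<integral>s. indicator {0..t} s *\<^sub>R Sg s \<omega> \<partial>(restrict_space lborel {0..1})) \<in> borel_measurable P"
  proof (rule sigma_finite_measure.borel_measurable_lebesgue_integral[OF sf_N])
    have j: "(\<lambda>(\<omega>, s). Sg s \<omega>) \<in> borel_measurable (P \<Otimes>\<^sub>M restrict_space lborel {0..1})"
      by (rule joint_meas_swap[OF assms(1)])
    have "(\<lambda>p. indicator {0..t} (snd p) *\<^sub>R (\<lambda>(\<omega>, s). Sg s \<omega>) p) \<in> borel_measurable (P \<Otimes>\<^sub>M restrict_space lborel {0..1})"
    proof (rule borel_measurable_scaleR[OF _ j])
      have i1: "(indicator {0..t} :: real \<Rightarrow> real) \<in> borel_measurable lborel"
        by (rule borel_measurable_indicator) simp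
      have i2: "(indicator {0..t} :: real \<Rightarrow> real) \<in> borel_measurable (restrict_space lborel {0..1::real})"
        by (rule measurable_restrict_space1[OF i1])
      show "(\<lambda>p. indicator {0..t} (snd p) :: real) \<in> borel_measurable (P \<Otimes>\<^sub>M restrict_space lborel {0..1})"
        by (rule measurable_compose[OF measurable_snd i2])
    qed
    then show "(\<lambda>(x, y). indicator {0..t} y *\<^sub>R Sg y x) \<in> borel_measurable (P \<Otimes>\<^sub>M restrict_space lborel {0..1})"
      by (simp add: case_prod_beta)
  qed
  then show ?thesis unfolding eq .
qed

lemma Kc_mono: "T' \<subseteq> T \<Longrightarrow> Kc T c R B f \<Longrightarrow> Kc T' c R B f"
  unfolding Kc_def by blast

lemma Kc_restrict: "Kc {0..1} c R B (restrict f {0..1}) = Kc {0..1} c R B f"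
  unfolding Kc_def by simp

lemma per_n:
  fixes Pn :: "(real \<Rightarrow> real^'d) measure" and Sg :: "real \<Rightarrow> (real \<Rightarrow> real^'d) \<Rightarrow> real^'d^'d"
  assumes inP: "in_P_with Pn Sg" and c: "0 < c" and R: "0 < R" and eps: "0 < \<epsilon>" and Sr: "0 \<le> Sr"
    and RS: "Sr / R \<le> \<epsilon>"
    and Hb: "(\<integral>\<^sup>+ \<omega>. (\<integral>\<^sup>+ s. ennreal (psi (norm (Sg s \<omega>) / c)) \<partial>(restrict_space lborel {0..1})) \<partial>Pn) \<le> ennreal Sr"
  shows "1 - \<epsilon> \<le> measure Pn {\<omega> \<in> space Pn. restrict (\<lambda>t. int_cov Sg t \<omega>) {0..1} \<in> Kset c R (c * (exp 1 + R))}"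
proof -
  define B where "B = c * (exp 1 + R)"
  define Q where "Q = {0..1::real} \<inter> \<rat>"
  define Phi where "Phi \<omega> = (\<integral>\<^sup>+ s. ennreal (psi (norm (Sg s \<omega>) / c)) \<partial>(restrict_space lborel {0..1}))" for \<omega>
  have ps: "prob_space Pn" using inP by (simp add: in_P_with_def)
  have fm: "finite_measure Pn" by (rule prob_space.finite_measure[OF ps])
  have spP: "space Pn = path_set" by (rule space_P[OF inP])
  have psdS: "Sg s \<omega> \<in> psd_set" if "s \<in> {0..1}" "\<omega> \<in> space Pn" for s \<omega>
    using inP spP that by (simp add: in_P_with_def)
  define Ev where "Ev = {\<omega> \<in> space Pn. restrict (\<lambda>t. int_cov Sg t \<omega>) {0..1} \<in> Kset c R B}"
  have iff: "restrict (\<lambda>t. int_cov Sg t \<omega>) {0..1} \<in> Kset c R B \<longleftrightarrow> Kc Q c R B (\<lambda>t. int_cov Sg t \<omega>)"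
    if \<omega>: "\<omega> \<in> space Pn" for \<omega>
  proof
    assume "restrict (\<lambda>t. int_cov Sg t \<omega>) {0..1} \<in> Kset c R B"
    then have "Kc {0..1} c R B (restrict (\<lambda>t. int_cov Sg t \<omega>) {0..1})" by (simp add: Kset_def)
    then have "Kc {0..1} c R B (\<lambda>t. int_cov Sg t \<omega>)" by (simp add: Kc_restrict)
    then show "Kc Q c R B (\<lambda>t. int_cov Sg t \<omega>)" by (rule Kc_mono[rotated]) (simp add: Q_def)
  next
    assume KQ: "Kc Q c R B (\<lambda>t. int_cov Sg t \<omega>)"
    have "Kc {0..1} c R B (\<lambda>t. int_cov Sg t \<omega>)"
    proof (rule Kc_extend[OF _ KQ])
      fix t :: real assume t: "t \<in> {0..1}"
      then have "\<exists>q. (\<forall>k. q k \<in> {0..1} \<inter> \<rat>) \<and> q \<longlonglongrightarrow> t \<and>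
          (\<lambda>k. (LINT s:{0..q k}|lborel. Sg s \<omega>)) \<longlonglongrightarrow> (LINT s:{0..t}|lborel. Sg s \<omega>)"
        by (intro approx_seq[OF path_meas[OF inP \<omega>]]) auto
      then show "\<exists>q. (\<forall>k. q k \<in> Q) \<and> q \<longlonglongrightarrow> t \<and> (\<lambda>k. int_cov Sg (q k) \<omega>) \<longlonglongrightarrow> int_cov Sg t \<omega>"
        by (simp add: int_cov_def Q_def)
    qed
    then show "restrict (\<lambda>t. int_cov Sg t \<omega>) {0..1} \<in> Kset c R B" by (simp add: Kset_def Kc_restrict)
  qed
  have Ev_eq: "Ev = {\<omega> \<in> space Pn. Kc Q c R B (\<lambda>t. int_cov Sg t \<omega>)}"
    unfolding Ev_def using iff by blast
  have cQ: "countable Q" unfolding Q_def by (intro countable_Int2 countable_rat)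
  have At: "(\<lambda>\<omega>. int_cov Sg t \<omega>) \<in> borel_measurable Pn" if "t \<in> Q" for t
    using At_meas[OF inP] that by (simp add: Q_def)
  have psdB: "psd_set \<in> sets (borel :: (real^'d^'d) measure)" by (rule borel_closed[OF closed_psd])
  have S1: "{\<omega>\<in>space Pn. int_cov Sg t \<omega> \<in> psd_set \<and> norm (int_cov Sg t \<omega>) \<le> B} \<in> sets Pn" if "t \<in> Q" for t
  proof -
    have [measurable]: "(\<lambda>\<omega>. int_cov Sg t \<omega>) \<in> borel_measurable Pn" using At that .
    note psdB[measurable]
    show ?thesis by measurable
  qed
  have S2: "{\<omega>\<in>space Pn. 1 \<le> m \<longrightarrow> norm (int_cov Sg t \<omega> - int_cov Sg s \<omega>) \<le> c * (\<bar>t - s\<bar> * exp (real m) + R / real m)} \<in> sets Pn"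
    if "s \<in> Q" "t \<in> Q" for s t and m :: nat
  proof -
    have [measurable]: "(\<lambda>\<omega>. int_cov Sg t \<omega>) \<in> borel_measurable Pn" using At that by blast
    have [measurable]: "(\<lambda>\<omega>. int_cov Sg s \<omega>) \<in> borel_measurable Pn" using At that by blast
    show ?thesis by measurable
  qed
  have EvM: "Ev \<in> sets Pn"
    unfolding Ev_eq Kc_def
  proof (rule sets.sets_Collect_conj)
    show "{\<omega> \<in> space Pn. \<forall>t\<in>Q. int_cov Sg t \<omega> \<in> psd_set \<and> norm (int_cov Sg t \<omega>) \<le> B} \<in> sets Pn"
      by (rule sets.sets_Collect_countable_All'[OF S1 cQ])
    show "{\<omega> \<in> space Pn. \<forall>s\<in>Q. \<forall>t\<in>Q. \<forall>m. 1 \<le> m \<longrightarrow> norm (int_cov Sg t \<omega> - int_cov Sg s \<omega>) \<le> c * (\<bar>t - s\<bar> * exp (real m) + R / real m)} \<in> sets Pn"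
      by (intro sets.sets_Collect_countable_All'[OF _ cQ] sets.sets_Collect_countable_All S2)
  qed
  have PhiM: "Phi \<in> borel_measurable Pn" using Phi_meas[OF inP, of c] by (simp add: Phi_def[abs_def])
  define Bad where "Bad = {\<omega> \<in> space Pn. 1 \<le> ennreal (1/R) * Phi \<omega>}"
  have BadM: "Bad \<in> sets Pn" using PhiM unfolding Bad_def by measurable
  have "emeasure Pn Bad \<le> ennreal (1/R) * set_nn_integral Pn (space Pn) Phi"
    unfolding Bad_def by (rule nn_integral_Markov_inequality) (use PhiM in measurable)
  also have "set_nn_integral Pn (space Pn) Phi = (\<integral>\<^sup>+ \<omega>. Phi \<omega> \<partial>Pn)"
    by (intro nn_integral_cong) simp
  also have "(\<integral>\<^sup>+ \<omega>. Phi \<omega> \<partial>Pn) \<le> ennreal Sr" using Hb by (simp add: Phi_def)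
  also have "ennreal (1/R) * ennreal Sr = ennreal (Sr / R)"
    using R Sr by (simp add: ennreal_mult[symmetric])
  finally have "emeasure Pn Bad \<le> ennreal (Sr / R)" by (simp add: mult_left_mono)
  also have "\<dots> \<le> ennreal \<epsilon>" by (rule ennreal_leI[OF RS])
  finally have "ennreal (measure Pn Bad) \<le> ennreal \<epsilon>"
    using finite_measure.emeasure_eq_measure[OF fm] by simp
  then have mBad: "measure Pn Bad \<le> \<epsilon>" using eps by simp
  have good: "space Pn - Bad \<subseteq> Ev"
  proof
    fix \<omega> assume "\<omega> \<in> space Pn - Bad"
    then have \<omega>: "\<omega> \<in> space Pn" and nb: "\<not> 1 \<le> ennreal (1/R) * Phi \<omega>" by (auto simp: Bad_def)
    have PhiR: "Phi \<omega> \<le> ennreal R"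
    proof (cases "Phi \<omega>" rule: ennreal_cases)
      case (real p)
      have "ennreal (1/R) * Phi \<omega> = ennreal (p / R)" using real R by (simp add: ennreal_mult[symmetric])
      then have nb': "\<not> ennreal 1 \<le> ennreal (p / R)" using nb by simp
      have "0 \<le> p / R" using real R by simp
      then have "\<not> 1 \<le> p / R" using nb' ennreal_le_iff by blast
      then have "p \<le> R" using R by (simp add: field_simps)
      then show ?thesis using real by simp
    next
      case top
      then have "ennreal (1/R) * Phi \<omega> = \<top>" using R by (simp add: ennreal_mult_top)
      then show ?thesis using nb by simp
    qed
    have "Kc {0..1} c R (c * (exp 1 + R)) (\<lambda>t. LINT s:{0..t}|lborel. Sg s \<omega>)"
      by (rule good_path[OF path_meas[OF inP \<omega>] psdS[OF _ \<omega>] c R]) (use PhiR in \<open>simp_all add: Phi_def\<close>)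
    then show "\<omega> \<in> Ev" using \<omega> by (simp add: Ev_def Kset_def Kc_restrict B_def int_cov_def[abs_def])
  qed
  have "1 - \<epsilon> \<le> 1 - measure Pn Bad" using mBad by simp
  also have "\<dots> = measure Pn (space Pn - Bad)" using prob_space.prob_compl[OF ps BadM] by simp
  also have "\<dots> \<le> measure Pn Ev" by (rule finite_measure.finite_measure_mono[OF fm good EvM])
  finally show ?thesis by (simp add: Ev_def B_def)
qed

theorem mainTheorem14:
  fixes Sbar2 :: "real \<Rightarrow> real^'d \<Rightarrow> real^'d^'d"
    and lambda2 :: "real \<Rightarrow> real^'d \<Rightarrow> real"
    and P :: "nat \<Rightarrow> (real \<Rightarrow> real^'d) measure"
    and Sig :: "nat \<Rightarrow> real \<Rightarrow> (real \<Rightarrow> real^'d) \<Rightarrow> real^'d^'d"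
    and b_lo b_hi M :: real
  assumes Sbar2_pd: "\<forall>t\<in>{0..1}. \<forall>x. Sbar2 t x \<in> pd_set"
    and Sbar2_meas: "(\<lambda>(t, x). Sbar2 t x) \<in> borel_measurable borel"
    and lambda2_cont: "continuous_on ({0..1} \<times> UNIV) (\<lambda>(t, x). lambda2 t x)"
    and R_b: "0 < b_lo" "b_lo \<le> b_hi"
    and R_lambda2: "\<forall>t\<in>{0..1}. \<forall>x. b_lo \<le> lambda2 t x \<and> lambda2 t x \<le> b_hi"
    and R_M: "0 < M" "\<forall>t\<in>{0..1}. \<forall>x v. v \<bullet> (Sbar2 t x *v v) \<le> M * (v \<bullet> v)"
    and inP: "\<forall>n. in_P_with (P n) (Sig n)"
    and entropy: "(SUP n. \<integral>\<^sup>+ \<omega>. (\<integral>\<^sup>+ t. indicator {0..1} t *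
                     ennreal (xlogx (lambda1 Sbar2 (Sig n) t \<omega>) + exp (-1)) \<partial>lborel) \<partial>(P n)) < \<top>"
  shows "\<forall>\<epsilon>>0. \<exists>K. compactin (mtopology_of CS_metric) K \<and>
           (\<forall>n. 1 - \<epsilon> \<le> measure (P n)
                 {\<omega> \<in> space (P n). restrict (\<lambda>t. int_cov (Sig n) t \<omega>) {0..1} \<in> K})"
proof (intro allI impI)
  fix \<epsilon> :: real assume eps: "0 < \<epsilon>"
  define D where "D = real CARD('d)"
  have Dpos: "0 < D" by (simp add: D_def)
  define c where "c = D * D * M"
  have c: "0 < c" using Dpos R_M(1) by (simp add: c_def)
  define Hn where "Hn n = (\<integral>\<^sup>+ \<omega>. (\<integral>\<^sup>+ t. indicator {0..1} t *
                     ennreal (xlogx (lambda1 Sbar2 (Sig n) t \<omega>) + exp (-1)) \<partial>lborel) \<partial>(P n))" for n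
  have Sfin: "(SUP n. Hn n) < \<top>" using entropy by (simp add: Hn_def)
  define Sr where "Sr = enn2real (SUP n. Hn n)"
  have Sr0: "0 \<le> Sr" by (simp add: Sr_def)
  have HS: "Hn n \<le> ennreal Sr" for n
  proof -
    have "Hn n \<le> (SUP n. Hn n)" by (rule SUP_upper) simp
    also have "\<dots> = ennreal Sr" using Sfin by (simp add: Sr_def)
    finally show ?thesis .
  qed
  define R where "R = Sr / \<epsilon> + 1"
  have R: "0 < R" using Sr0 eps by (simp add: R_def add_nonneg_pos)
  have RS: "Sr / R \<le> \<epsilon>"
  proof -
    have "\<epsilon> * R = Sr + \<epsilon>" using eps by (simp add: R_def field_simps)
    then have "Sr \<le> \<epsilon> * R" using eps by simp
    then show ?thesis using R by (simp add: pos_divide_le_eq mult.commute)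
  qed
  show "\<exists>K. compactin (mtopology_of CS_metric) K \<and>
           (\<forall>n. 1 - \<epsilon> \<le> measure (P n)
                 {\<omega> \<in> space (P n). restrict (\<lambda>t. int_cov (Sig n) t \<omega>) {0..1} \<in> K})"
  proof (intro exI[of _ "Kset c R (c * (exp 1 + R))"] conjI allI)
    show "compactin (mtopology_of CS_metric) (Kset c R (c * (exp 1 + R)) :: (real \<Rightarrow> real^'d^'d) set)"
      by (rule compact_Kset[OF c]) (use R in simp)
    fix n
    show "1 - \<epsilon> \<le> measure (P n) {\<omega> \<in> space (P n). restrict (\<lambda>t. int_cov (Sig n) t \<omega>) {0..1} \<in> Kset c R (c * (exp 1 + R))}"
    proof (rule per_n[OF inP[rule_format, of n] c R eps Sr0 RS])
      have "(\<integral>\<^sup>+ \<omega>. (\<integral>\<^sup>+ s. ennreal (psi (norm (Sig n s \<omega>) / c)) \<partial>(restrict_space lborel {0..1})) \<partial>P n) \<le> Hn n"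
        unfolding Hn_def
      proof (rule nn_integral_mono)
        fix \<omega> assume \<omega>: "\<omega> \<in> space (P n)"
        then have \<omega>p: "\<omega> \<in> path_set" using space_P[OF inP[rule_format, of n]] by simp
        have "(\<integral>\<^sup>+ s. ennreal (psi (norm (Sig n s \<omega>) / c)) \<partial>(restrict_space lborel {0..1}))
            = (\<integral>\<^sup>+ s. ennreal (psi (norm (Sig n s \<omega>) / c)) * indicator {0..1} s \<partial>lborel)"
          by (subst nn_integral_restrict_space) auto
        also have "\<dots> \<le> (\<integral>\<^sup>+ t. indicator {0..1} t * ennreal (xlogx (lambda1 Sbar2 (Sig n) t \<omega>) + exp (-1)) \<partial>lborel)"
        proof (rule nn_integral_mono)
          fix s :: real
          show "ennreal (psi (norm (Sig n s \<omega>) / c)) * indicator {0..1} s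
              \<le> indicator {0..1} s * ennreal (xlogx (lambda1 Sbar2 (Sig n) s \<omega>) + exp (-1))"
          proof (cases "s \<in> {0..1}")
            case True
            have psd: "Sig n s \<omega> \<in> psd_set" using inP True \<omega>p by (simp add: in_P_with_def)
            have pd: "Sbar2 s (\<omega> s) \<in> pd_set" using Sbar2_pd True by blast
            have MS: "\<forall>v. v \<bullet> (Sbar2 s (\<omega> s) *v v) \<le> M * (v \<bullet> v)" using R_M(2) True by blast
            have "norm (Sig n s \<omega>) \<le> c * lambda1 Sbar2 (Sig n) s \<omega>"
              using norm_le_lambda[OF pd MS R_M(1) psd] by (simp add: c_def D_def lambda1_def)
            then have le: "norm (Sig n s \<omega>) / c \<le> lambda1 Sbar2 (Sig n) s \<omega>"
              using c by (simp add: field_simps)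
            have nn: "0 \<le> norm (Sig n s \<omega>) / c" using c by simp
            have "psi (norm (Sig n s \<omega>) / c) \<le> psi (lambda1 Sbar2 (Sig n) s \<omega>)"
              by (rule psi_mono[OF nn le])
            also have "\<dots> \<le> xlogx (lambda1 Sbar2 (Sig n) s \<omega>) + exp (-1)"
              by (rule psi_le) (use nn le in linarith)
            finally show ?thesis using True by (simp add: ennreal_leI)
          next
            case False then show ?thesis by simp
          qed
        qed
        finally show "(\<integral>\<^sup>+ s. ennreal (psi (norm (Sig n s \<omega>) / c)) \<partial>(restrict_space lborel {0..1}))
            \<le> (\<integral>\<^sup>+ t. indicator {0..1} t * ennreal (xlogx (lambda1 Sbar2 (Sig n) t \<omega>) + exp (-1)) \<partial>lborel)" .
      qed
      also have "\<dots> \<le> ennreal Sr" by (rule HS)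
      finally show "(\<integral>\<^sup>+ \<omega>. (\<integral>\<^sup>+ s. ennreal (psi (norm (Sig n s \<omega>) / c)) \<partial>(restrict_space lborel {0..1})) \<partial>P n) \<le> ennreal Sr" .
    qed
  qed
qed

end
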